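(* Let $Q$ be a quantale, $M$ a $Q$-module and $\mathcal{F},\mathcal{G}\in\operatorname{mF}(Q)$. If both $\mathcal{F}$ and $\mathcal{F}+\mathcal{G}$ are localizable over $M$, then $\mathcal{G}$ is localizable over the $Q$-module $M_\mathcal{F}$, and the map $M_{\mathcal{F}+\mathcal{G}}\to (M_\mathcal{F})_\mathcal{G}$, $\overline{x}\mapsto\overline{\overline{x}}$, is a well-defined isomorphism of $Q$-modules.
   Context: A quantale is a poset $Q$ in which every nonempty subset $S$ has a join $\sum S$ (binary joins written $a+b$; no bottom element is required), with a top element $1$ and a commutative, associative multiplication with unit $1$ satisfying $a\cdot\sum_{i\in I}b_i=\sum_{i\in I}ab_i$ for every nonempty $I$. A $Q$-module is a poset $M$ with all nonempty joins and an action $Q\times M\to M$ which is associative, has $1$ acting as the identity, and distributes over nonempty joins in each variable. A Q-premodule is the same except $M$ is only required to have binary joins and distributivity over finite nonempty joins. A multiplicative filter (m-filter) of $Q$ is a subset $\mathcal{F}\subseteq Q$ with $1\in\mathcal{F}$, upward closed and closed under multiplication; $\operatorname{mF}(Q)$ is the set of m-filters; $\mathcal{F}+\mathcal{G}$ is the smallest m-filter containing $\mathcal{F}\cup\mathcal{G}$. Localization: for $a,b\in M$ write $a\preceq^1_\mathcal{F} b$ if there are families $(a_i)_{i\in I}$ in $M$ and $(s_i)_{i\in I}$ in $\mathcal{F}$ with $a\le\sum_i a_i$ and $s_ia_i\le b$ for all $i$; for $n\ge1$, $a\preceq^n_\mathcal{F} b$ means there are $c_1,\dots,c_{n-1}\in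 M$ with $a\preceq^1_\mathcal{F}c_1\preceq^1_\mathcal{F}\cdots\preceq^1_\mathcal{F}c_{n-1}\preceq^1_\mathcal{F}b$; $a\preceq_\mathcal{F}b$ means $a\preceq^n_\mathcal{F}b$ for some $n$. This is a preorder; $M_\mathcal{F}$ is the quotient by $a\sim b\iff a\preceq_\mathcal{F}b\preceq_\mathcal{F}a$, with class $\overline a$ and order $\overline a\le\overline b\iff a\preceq_\mathcal{F}b$; it is a $Q$-premodule with $\overline a+\overline b=\overline{a+b}$, $q\overline a=\overline{qa}$. $\mathcal{F}$ is localizable over $M$ if for each $b\in M$ there is $n_b\in\mathbb{N}$ such that $a\preceq_\mathcal{F}b$ implies $a\preceq^{n_b}_\mathcal{F}b$ for all $a\in M$; then $M_\mathcal{F}$ is a $Q$-module with $\sum_i\overline{a_i}=\overline{\sum_ia_i}$ and $q\overline a=\overline{qa}$. *)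

theory Defs
  imports Main
begin

definition poset_on :: "'a set \<Rightarrow> ('a \<Rightarrow> 'a \<Rightarrow> bool) \<Rightarrow> bool" where
  "poset_on A le \<longleftrightarrow>
     (\<forall>x\<in>A. le x x) \<and>
     (\<forall>x\<in>A. \<forall>y\<in>A. le x y \<and> le y x \<longrightarrow> x = y) \<and>
     (\<forall>x\<in>A. \<forall>y\<in>A. \<forall>z\<in>A. le x y \<and> le y z \<longrightarrow> le x z)"

definition is_lub :: "'a set \<Rightarrow> ('a \<Rightarrow> 'a \<Rightarrow> bool) \<Rightarrow> 'a set \<Rightarrow> 'a \<Rightarrow> bool" where
  "is_lub A le S x \<longleftrightarrow>
     x \<in> A \<and> (\<forall>s\<in>S. le s x) \<and> (\<forall>y\<in>A. (\<forall>s\<in>S. le s y) \<longrightarrow> le x y)"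

record 'q quantale_str =
  qcar :: "'q set"
  qle  :: "'q \<Rightarrow> 'q \<Rightarrow> bool"
  qmul :: "'q \<Rightarrow> 'q \<Rightarrow> 'q"
  qone :: 'q

record ('q, 'm) qmod =
  mcar :: "'m set"
  mle  :: "'m \<Rightarrow> 'm \<Rightarrow> bool"
  mact :: "'q \<Rightarrow> 'm \<Rightarrow> 'm"

definition quantale :: "'q quantale_str \<Rightarrow> bool" where
  "quantale Q \<longleftrightarrow>
     poset_on (qcar Q) (qle Q) \<and>
     (\<forall>S. S \<subseteq> qcar Q \<and> S \<noteq> {} \<longrightarrow> (\<exists>x. is_lub (qcar Q) (qle Q) S x)) \<and>
     qone Q \<in> qcar Q \<and> (\<forall>a\<in>qcar Q. qle Q a (qone Q)) \<and>
     (\<forall>a\<in>qcar Q. \<forall>b\<in>qcar Q. qmul Q a b \<in> qcar Q) \<and>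
     (\<forall>a\<in>qcar Q. \<forall>b\<in>qcar Q. qmul Q a b = qmul Q b a) \<and>
     (\<forall>a\<in>qcar Q. \<forall>b\<in>qcar Q. \<forall>c\<in>qcar Q. qmul Q (qmul Q a b) c = qmul Q a (qmul Q b c)) \<and>
     (\<forall>a\<in>qcar Q. qmul Q (qone Q) a = a) \<and>
     (\<forall>a\<in>qcar Q. \<forall>S x. S \<subseteq> qcar Q \<and> S \<noteq> {} \<and> is_lub (qcar Q) (qle Q) S x \<longrightarrow>
        is_lub (qcar Q) (qle Q) (qmul Q a ` S) (qmul Q a x))"

definition qmodule :: "'q quantale_str \<Rightarrow> ('q, 'm) qmod \<Rightarrow> bool" where
  "qmodule Q M \<longleftrightarrow>
     poset_on (mcar M) (mle M) \<and>
     (\<forall>S. S \<subseteq> mcar M \<and> S \<noteq> {} \<longrightarrow> (\<exists>x. is_lub (mcar M) (mle M) S x)) \<and>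
     (\<forall>q\<in>qcar Q. \<forall>x\<in>mcar M. mact M q x \<in> mcar M) \<and>
     (\<forall>p\<in>qcar Q. \<forall>q\<in>qcar Q. \<forall>x\<in>mcar M. mact M (qmul Q p q) x = mact M p (mact M q x)) \<and>
     (\<forall>x\<in>mcar M. mact M (qone Q) x = x) \<and>
     (\<forall>q\<in>qcar Q. \<forall>S x. S \<subseteq> mcar M \<and> S \<noteq> {} \<and> is_lub (mcar M) (mle M) S x \<longrightarrow>
        is_lub (mcar M) (mle M) (mact M q ` S) (mact M q x)) \<and>
     (\<forall>x\<in>mcar M. \<forall>S p. S \<subseteq> qcar Q \<and> S \<noteq> {} \<and> is_lub (qcar Q) (qle Q) S p \<longrightarrow>
        is_lub (mcar M) (mle M) ((\<lambda>q. mact M q x) ` S) (mact M p x))"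

definition module_hom :: "'q quantale_str \<Rightarrow> ('q, 'm) qmod \<Rightarrow> ('q, 'n) qmod \<Rightarrow> ('m \<Rightarrow> 'n) \<Rightarrow> bool" where
  "module_hom Q M N f \<longleftrightarrow>
     f ` mcar M \<subseteq> mcar N \<and>
     (\<forall>S x. S \<subseteq> mcar M \<and> S \<noteq> {} \<and> is_lub (mcar M) (mle M) S x \<longrightarrow>
        is_lub (mcar N) (mle N) (f ` S) (f x)) \<and>
     (\<forall>q\<in>qcar Q. \<forall>x\<in>mcar M. f (mact M q x) = mact N q (f x))"

definition module_iso :: "'q quantale_str \<Rightarrow> ('q, 'm) qmod \<Rightarrow> ('q, 'n) qmod \<Rightarrow> ('m \<Rightarrow> 'n) \<Rightarrow> bool" where
  "module_iso Q M N f \<longleftrightarrow>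
     bij_betw f (mcar M) (mcar N) \<and> module_hom Q M N f \<and>
     module_hom Q N M (inv_into (mcar M) f)"

definition mfilter :: "'q quantale_str \<Rightarrow> 'q set \<Rightarrow> bool" where
  "mfilter Q F \<longleftrightarrow>
     F \<subseteq> qcar Q \<and> qone Q \<in> F \<and>
     (\<forall>a\<in>F. \<forall>b\<in>qcar Q. qle Q a b \<longrightarrow> b \<in> F) \<and>
     (\<forall>a\<in>F. \<forall>b\<in>F. qmul Q a b \<in> F)"

definition mF :: "'q quantale_str \<Rightarrow> 'q set set" where
  "mF Q = {F. mfilter Q F}"

definition mfilter_sum :: "'q quantale_str \<Rightarrow> 'q set \<Rightarrow> 'q set \<Rightarrow> 'q set" where
  "mfilter_sum Q F G = \<Inter> {H. mfilter Q H \<and> F \<union> G \<subseteq> H}"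

definition prec1 :: "('q, 'm) qmod \<Rightarrow> 'q set \<Rightarrow> 'm \<Rightarrow> 'm \<Rightarrow> bool" where
  "prec1 M F a b \<longleftrightarrow> a \<in> mcar M \<and> b \<in> mcar M \<and>
     (\<exists>P. P \<subseteq> mcar M \<times> F \<and> P \<noteq> {} \<and>
        (\<exists>j. is_lub (mcar M) (mle M) (fst ` P) j \<and> mle M a j) \<and>
        (\<forall>(c, s)\<in>P. mle M (mact M s c) b))"

text \<open>precn n: a chain of n one-step relations (n = 0 is equality, only used for n \<ge> 1).\<close>
fun precn :: "('q, 'm) qmod \<Rightarrow> 'q set \<Rightarrow> nat \<Rightarrow> 'm \<Rightarrow> 'm \<Rightarrow> bool" where
  "precn M F 0 a b \<longleftrightarrow> a = b \<and> a \<in> mcar M"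
| "precn M F (Suc n) a b \<longleftrightarrow> (\<exists>c. precn M F n a c \<and> prec1 M F c b)"

definition prec :: "('q, 'm) qmod \<Rightarrow> 'q set \<Rightarrow> 'm \<Rightarrow> 'm \<Rightarrow> bool" where
  "prec M F a b \<longleftrightarrow> (\<exists>n\<ge>1. precn M F n a b)"

definition localizable :: "('q, 'm) qmod \<Rightarrow> 'q set \<Rightarrow> bool" where
  "localizable M F \<longleftrightarrow>
     (\<forall>b\<in>mcar M. \<exists>n\<ge>1. \<forall>a\<in>mcar M. prec M F a b \<longrightarrow> precn M F n a b)"

definition cls :: "('q, 'm) qmod \<Rightarrow> 'q set \<Rightarrow> 'm \<Rightarrow> 'm set" where
  "cls M F a = {b \<in> mcar M. prec M F a b \<and> prec M F b a}"

definition loc :: "('q, 'm) qmod \<Rightarrow> 'q set \<Rightarrow> ('q, 'm set) qmod" where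
  "loc M F = \<lparr> mcar = cls M F ` mcar M,
     mle = (\<lambda>X Y. \<exists>a\<in>mcar M. \<exists>b\<in>mcar M. X = cls M F a \<and> Y = cls M F b \<and> prec M F a b),
     mact = (\<lambda>q X. cls M F (mact M q (SOME a. a \<in> X))) \<rparr>"

end

theory Submission
  imports Defs
begin


lemma lub_unique:
  assumes "poset_on A le" "is_lub A le S x" "is_lub A le S y" shows "x = y"
  using assms unfolding poset_on_def is_lub_def by blast

locale quant =
  fixes Q :: "'q quantale_str"
  assumes Qq: "quantale Q"
begin

lemmas qax = Qq[unfolded quantale_def]
lemma qposet: "poset_on (qcar Q) (qle Q)" using qax by blast
lemma qle_refl: "a \<in> qcar Q \<Longrightarrow> qle Q a a" using qposet unfolding poset_on_def by blast
lemma qone_car: "qone Q \<in> qcar Q" using qax by (elim conjE)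
lemma qmul_car: "a \<in> qcar Q \<Longrightarrow> b \<in> qcar Q \<Longrightarrow> qmul Q a b \<in> qcar Q" using qax by (elim conjE) simp
lemma qmul_comm: "a \<in> qcar Q \<Longrightarrow> b \<in> qcar Q \<Longrightarrow> qmul Q a b = qmul Q b a" using qax by (elim conjE) simp
lemma qmul_assoc: "a \<in> qcar Q \<Longrightarrow> b \<in> qcar Q \<Longrightarrow> c \<in> qcar Q \<Longrightarrow> qmul Q (qmul Q a b) c = qmul Q a (qmul Q b c)"
  using qax by (elim conjE) simp
lemma qmul_one: "a \<in> qcar Q \<Longrightarrow> qmul Q (qone Q) a = a" using qax by (elim conjE) simp
lemma qle_trans: "a \<in> qcar Q \<Longrightarrow> b \<in> qcar Q \<Longrightarrow> c \<in> qcar Q \<Longrightarrow> qle Q a b \<Longrightarrow> qle Q b c \<Longrightarrow> qle Q a c"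
  using qposet unfolding poset_on_def by blast
lemma qmul_lub: "a \<in> qcar Q \<Longrightarrow> S \<subseteq> qcar Q \<Longrightarrow> S \<noteq> {} \<Longrightarrow> is_lub (qcar Q) (qle Q) S x \<Longrightarrow>
        is_lub (qcar Q) (qle Q) (qmul Q a ` S) (qmul Q a x)"
proof -
  have ax: "\<forall>a\<in>qcar Q. \<forall>S x. S \<subseteq> qcar Q \<and> S \<noteq> {} \<and> is_lub (qcar Q) (qle Q) S x \<longrightarrow>
        is_lub (qcar Q) (qle Q) (qmul Q a ` S) (qmul Q a x)" using qax by (elim conjE) assumption
  show "a \<in> qcar Q \<Longrightarrow> S \<subseteq> qcar Q \<Longrightarrow> S \<noteq> {} \<Longrightarrow> is_lub (qcar Q) (qle Q) S x \<Longrightarrow>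
        is_lub (qcar Q) (qle Q) (qmul Q a ` S) (qmul Q a x)" using ax by blast
qed

lemma qlub_pair: "a \<in> qcar Q \<Longrightarrow> b \<in> qcar Q \<Longrightarrow> qle Q a b \<Longrightarrow> is_lub (qcar Q) (qle Q) {a,b} b"
  unfolding is_lub_def using qle_refl by auto

lemma qmul_mono: assumes h: "c \<in> qcar Q" "a \<in> qcar Q" "b \<in> qcar Q" "qle Q a b" shows "qle Q (qmul Q c a) (qmul Q c b)"
proof -
  have "is_lub (qcar Q) (qle Q) (qmul Q c ` {a,b}) (qmul Q c b)"
    using qmul_lub[OF h(1) _ _ qlub_pair[OF h(2,3,4)]] h by auto
  then show ?thesis unfolding is_lub_def by auto
qed

lemma qcar_filter: "mfilter Q (qcar Q)"
  unfolding mfilter_def using qone_car qmul_car by auto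

lemma sum_filter:
  assumes "mfilter Q F" "mfilter Q G"
  shows "mfilter Q (mfilter_sum Q F G)"
proof -
  define HH where "HH = {H. mfilter Q H \<and> F \<union> G \<subseteq> H}"
  have qc: "qcar Q \<in> HH" using qcar_filter assms unfolding mfilter_def HH_def by auto
  have "mfilter Q (\<Inter>HH)" unfolding mfilter_def
  proof (intro conjI)
    show "\<Inter> HH \<subseteq> qcar Q" using qc by blast
    show "qone Q \<in> \<Inter> HH" unfolding mfilter_def HH_def by auto
    show "\<forall>a\<in>\<Inter> HH. \<forall>b\<in>qcar Q. qle Q a b \<longrightarrow> b \<in> \<Inter> HH"
      unfolding mfilter_def HH_def by blast
    show "\<forall>a\<in>\<Inter> HH. \<forall>b\<in>\<Inter> HH. qmul Q a b \<in> \<Inter> HH"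
      unfolding mfilter_def HH_def by blast
  qed
  then show ?thesis unfolding mfilter_sum_def HH_def .
qed

lemma sum_sup: "F \<subseteq> mfilter_sum Q F G" "G \<subseteq> mfilter_sum Q F G"
  unfolding mfilter_sum_def by auto

lemma K_filter:
  assumes FF: "mfilter Q F" and GG: "mfilter Q G"
  shows "mfilter Q {t \<in> qcar Q. \<exists>f\<in>F. \<exists>g\<in>G. qle Q (qmul Q f g) t}" (is "mfilter Q ?K")
proof -
  have Fs: "F \<subseteq> qcar Q" "qone Q \<in> F" "\<forall>a\<in>F. \<forall>b\<in>F. qmul Q a b \<in> F" using FF unfolding mfilter_def by auto
  have Gs: "G \<subseteq> qcar Q" "qone Q \<in> G" "\<forall>a\<in>G. \<forall>b\<in>G. qmul Q a b \<in> G" using GG unfolding mfilter_def by auto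
  have one: "qone Q \<in> ?K"
  proof -
    have "qle Q (qmul Q (qone Q) (qone Q)) (qone Q)" using qone_car qmul_one[OF qone_car] qle_refl[OF qone_car] by simp
    then show ?thesis using Fs(2) Gs(2) qone_car by blast
  qed
  have up: "\<forall>a\<in>?K. \<forall>b\<in>qcar Q. qle Q a b \<longrightarrow> b \<in> ?K"
  proof (intro ballI impI)
    fix a b assume a: "a \<in> ?K" and b: "b \<in> qcar Q" and ab: "qle Q a b"
    then obtain f g where fg: "f \<in> F" "g \<in> G" "qle Q (qmul Q f g) a" by auto
    have "qmul Q f g \<in> qcar Q" using fg Fs Gs qmul_car by blast
    then have "qle Q (qmul Q f g) b" using qle_trans[of "qmul Q f g" a b] fg a b ab by auto
    then show "b \<in> ?K" using b fg by auto
  qed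
  have mul: "\<forall>a\<in>?K. \<forall>b\<in>?K. qmul Q a b \<in> ?K"
  proof (intro ballI)
    fix a b assume a: "a \<in> ?K" and b: "b \<in> ?K"
    then obtain f g f' g' where fg: "f \<in> F" "g \<in> G" "qle Q (qmul Q f g) a"
      and fg': "f' \<in> F" "g' \<in> G" "qle Q (qmul Q f' g') b" by auto
    have aQ: "a \<in> qcar Q" and bQ: "b \<in> qcar Q" using a b by auto
    have c: "f \<in> qcar Q" "g \<in> qcar Q" "f' \<in> qcar Q" "g' \<in> qcar Q" using fg fg' Fs Gs by auto
    have eq: "qmul Q (qmul Q f f') (qmul Q g g') = qmul Q (qmul Q f g) (qmul Q f' g')"
    proof -
      have "qmul Q (qmul Q f f') (qmul Q g g') = qmul Q f (qmul Q f' (qmul Q g g'))"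
        using c qmul_assoc qmul_car by auto
      also have "qmul Q f' (qmul Q g g') = qmul Q (qmul Q f' g) g'" using c qmul_assoc qmul_car by auto
      also have "qmul Q f' g = qmul Q g f'" using c qmul_comm by auto
      also have "qmul Q (qmul Q g f') g' = qmul Q g (qmul Q f' g')" using c qmul_assoc by auto
      also have "qmul Q f (qmul Q g (qmul Q f' g')) = qmul Q (qmul Q f g) (qmul Q f' g')"
        using c qmul_assoc qmul_car by auto
      finally show ?thesis .
    qed
    have c2: "qmul Q f g \<in> qcar Q" "qmul Q f' g' \<in> qcar Q" using c qmul_car by auto
    have "qle Q (qmul Q (qmul Q f' g') (qmul Q f g)) (qmul Q (qmul Q f' g') a)"
      using qmul_mono c2 aQ fg by auto
    then have 1: "qle Q (qmul Q (qmul Q f g) (qmul Q f' g')) (qmul Q a (qmul Q f' g'))"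
      using qmul_comm[of "qmul Q f' g'" "qmul Q f g"] qmul_comm[of "qmul Q f' g'" a] c2 aQ by simp
    have 2: "qle Q (qmul Q a (qmul Q f' g')) (qmul Q a b)" using qmul_mono c2 aQ bQ fg' by auto
    have 3: "qle Q (qmul Q (qmul Q f f') (qmul Q g g')) (qmul Q a b)"
      unfolding eq using qle_trans[OF _ _ _ 1 2] qmul_car c2 aQ bQ by auto
    show "qmul Q a b \<in> ?K" using 3 fg fg' Fs Gs qmul_car aQ bQ by blast
  qed
  show ?thesis unfolding mfilter_def using one up mul by blast
qed

lemma sum_sub_K:
  assumes FF: "mfilter Q F" and GG: "mfilter Q G"
  shows "mfilter_sum Q F G \<subseteq> {t \<in> qcar Q. \<exists>f\<in>F. \<exists>g\<in>G. qle Q (qmul Q f g) t}"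
proof -
  have Fs: "F \<subseteq> qcar Q" "qone Q \<in> F" using FF unfolding mfilter_def by auto
  have Gs: "G \<subseteq> qcar Q" "qone Q \<in> G" using GG unfolding mfilter_def by auto
  have "F \<union> G \<subseteq> {t \<in> qcar Q. \<exists>f\<in>F. \<exists>g\<in>G. qle Q (qmul Q f g) t}"
  proof
    fix t assume t: "t \<in> F \<union> G"
    then have tQ: "t \<in> qcar Q" using Fs Gs by auto
    show "t \<in> {t \<in> qcar Q. \<exists>f\<in>F. \<exists>g\<in>G. qle Q (qmul Q f g) t}"
    proof (cases "t \<in> F")
      case True
      have "qmul Q t (qone Q) = t" using qmul_comm[of t "qone Q"] qmul_one tQ qone_car by simp
      then have "qle Q (qmul Q t (qone Q)) t" using tQ qle_refl by simp
      then show ?thesis using True Gs tQ by blast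
    next
      case False
      then have "t \<in> G" using t by auto
      have "qle Q (qmul Q (qone Q) t) t" using tQ qle_refl qmul_one by simp
      then show ?thesis using Fs \<open>t \<in> G\<close> tQ by blast
    qed
  qed
  then have "{t \<in> qcar Q. \<exists>f\<in>F. \<exists>g\<in>G. qle Q (qmul Q f g) t} \<in> {H. mfilter Q H \<and> F \<union> G \<subseteq> H}"
    using K_filter[OF FF GG] by simp
  then show ?thesis unfolding mfilter_sum_def by (rule Inter_lower)
qed

end



lemma prec1I:
  assumes "a \<in> mcar M" "b \<in> mcar M" "P \<subseteq> mcar M \<times> F" "P \<noteq> {}" "is_lub (mcar M) (mle M) (fst ` P) j"
    "mle M a j" "\<And>c s. (c, s) \<in> P \<Longrightarrow> mle M (mact M s c) b"
  shows "prec1 M F a b"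
proof -
  have e: "\<exists>j. is_lub (mcar M) (mle M) (fst ` P) j \<and> mle M a j" using assms(5,6) by auto
  have f: "\<forall>(c, s)\<in>P. mle M (mact M s c) b" using assms(7) by auto
  show ?thesis unfolding prec1_def
    by (intro conjI exI[of _ P] assms(1-4) e f)
qed

lemma prec1D:
  assumes "prec1 M F a b"
  obtains P j where "a \<in> mcar M" "b \<in> mcar M" "P \<subseteq> mcar M \<times> F" "P \<noteq> {}" "is_lub (mcar M) (mle M) (fst ` P) j"
    "mle M a j" "\<And>c s. (c, s) \<in> P \<Longrightarrow> mle M (mact M s c) b"
  using assms unfolding prec1_def
  apply (elim conjE exE)
  apply (rule that)
  apply assumption+
  apply auto
  done

lemma prec1_filter_mono:
  assumes FF: "F \<subseteq> F'" and p: "prec1 M F a b" shows "prec1 M F' a b"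
proof -
  obtain P j where P: "a \<in> mcar M" "b \<in> mcar M" "P \<subseteq> mcar M \<times> F" "P \<noteq> {}" "is_lub (mcar M) (mle M) (fst ` P) j"
    "mle M a j" "\<And>c s. (c, s) \<in> P \<Longrightarrow> mle M (mact M s c) b" using prec1D[OF p] by metis
  have "P \<subseteq> mcar M \<times> F'" using P(3) FF by auto
  then show ?thesis using prec1I P by metis
qed

lemma precn_filter_mono: "F \<subseteq> F' \<Longrightarrow> precn M F n a b \<Longrightarrow> precn M F' n a b"
proof (induction n arbitrary: b)
  case 0 then show ?case by auto
next
  case (Suc n)
  from Suc.prems(2) obtain c where c: "precn M F n a c" "prec1 M F c b" by auto
  have 1: "precn M F' n a c" using Suc.IH[OF Suc.prems(1) c(1)] .
  have 2: "prec1 M F' c b" using prec1_filter_mono[OF Suc.prems(1) c(2)] .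
  show ?case using 1 2 by (simp only: precn.simps) blast
qed

lemma prec_filter_mono: "F \<subseteq> F' \<Longrightarrow> prec M F a b \<Longrightarrow> prec M F' a b"
proof -
  assume FF: "F \<subseteq> F'" and "prec M F a b"
  then obtain n where n: "n \<ge> 1" "precn M F n a b" unfolding prec_def by blast
  have "precn M F' n a b" using precn_filter_mono[OF FF n(2)] .
  then show "prec M F' a b" unfolding prec_def using n(1) by blast
qed

locale qm = quant +
  fixes M :: "('q, 'm) qmod" and F :: "'q set"
  assumes Mm: "qmodule Q M" and Ff: "mfilter Q F"
begin

lemmas maxioms = Mm[unfolded qmodule_def]

lemma poset: "poset_on (mcar M) (mle M)" using maxioms by (elim conjE) assumption
lemma le_refl: "x \<in> mcar M \<Longrightarrow> mle M x x" using poset unfolding poset_on_def by blast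
lemma le_antisym: "x \<in> mcar M \<Longrightarrow> y \<in> mcar M \<Longrightarrow> mle M x y \<Longrightarrow> mle M y x \<Longrightarrow> x = y"
  using poset unfolding poset_on_def by blast
lemma le_trans: "x \<in> mcar M \<Longrightarrow> y \<in> mcar M \<Longrightarrow> z \<in> mcar M \<Longrightarrow> mle M x y \<Longrightarrow> mle M y z \<Longrightarrow> mle M x z"
  using poset unfolding poset_on_def by blast

lemma lub_ex_ax: "\<forall>S. S \<subseteq> mcar M \<and> S \<noteq> {} \<longrightarrow> (\<exists>x. is_lub (mcar M) (mle M) S x)"
  using maxioms by (elim conjE) assumption
lemma lub_ex: "S \<subseteq> mcar M \<Longrightarrow> S \<noteq> {} \<Longrightarrow> \<exists>x. is_lub (mcar M) (mle M) S x"
  using lub_ex_ax by blast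
lemma act_car_ax: "\<forall>q\<in>qcar Q. \<forall>x\<in>mcar M. mact M q x \<in> mcar M" using maxioms by (elim conjE) assumption
lemma act_car: "q \<in> qcar Q \<Longrightarrow> x \<in> mcar M \<Longrightarrow> mact M q x \<in> mcar M" using act_car_ax by blast
lemma act_assoc_ax: "\<forall>p\<in>qcar Q. \<forall>q\<in>qcar Q. \<forall>x\<in>mcar M. mact M (qmul Q p q) x = mact M p (mact M q x)"
  using maxioms by (elim conjE) assumption
lemma act_assoc: "p \<in> qcar Q \<Longrightarrow> q \<in> qcar Q \<Longrightarrow> x \<in> mcar M \<Longrightarrow> mact M (qmul Q p q) x = mact M p (mact M q x)"
  using act_assoc_ax by blast
lemma act_one_ax: "\<forall>x\<in>mcar M. mact M (qone Q) x = x" using maxioms by (elim conjE) assumption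
lemma act_one: "x \<in> mcar M \<Longrightarrow> mact M (qone Q) x = x" using act_one_ax by blast
lemma act_lub_ax: "\<forall>q\<in>qcar Q. \<forall>S x. S \<subseteq> mcar M \<and> S \<noteq> {} \<and> is_lub (mcar M) (mle M) S x \<longrightarrow>
        is_lub (mcar M) (mle M) (mact M q ` S) (mact M q x)" using maxioms by (elim conjE) assumption
lemma act_lub: "q \<in> qcar Q \<Longrightarrow> S \<subseteq> mcar M \<Longrightarrow> S \<noteq> {} \<Longrightarrow> is_lub (mcar M) (mle M) S x \<Longrightarrow>
        is_lub (mcar M) (mle M) (mact M q ` S) (mact M q x)" using act_lub_ax by blast
lemma act_lub2_ax: "\<forall>x\<in>mcar M. \<forall>S p. S \<subseteq> qcar Q \<and> S \<noteq> {} \<and> is_lub (qcar Q) (qle Q) S p \<longrightarrow>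
        is_lub (mcar M) (mle M) ((\<lambda>q. mact M q x) ` S) (mact M p x)" using maxioms by (elim conjE) assumption
lemma act_lub2: "x \<in> mcar M \<Longrightarrow> S \<subseteq> qcar Q \<Longrightarrow> S \<noteq> {} \<Longrightarrow> is_lub (qcar Q) (qle Q) S p \<Longrightarrow>
        is_lub (mcar M) (mle M) ((\<lambda>q. mact M q x) ` S) (mact M p x)" using act_lub2_ax by blast

lemma F_sub: "F \<subseteq> qcar Q" using Ff unfolding mfilter_def by blast
lemma one_F: "qone Q \<in> F" using Ff unfolding mfilter_def by blast

lemma lub_car: "is_lub A le S x \<Longrightarrow> x \<in> A" unfolding is_lub_def by blast
lemma lub_upper: "is_lub A le S x \<Longrightarrow> s \<in> S \<Longrightarrow> le s x" unfolding is_lub_def by blast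
lemma lub_least: "is_lub A le S x \<Longrightarrow> y \<in> A \<Longrightarrow> (\<And>s. s \<in> S \<Longrightarrow> le s y) \<Longrightarrow> le x y"
  unfolding is_lub_def by blast

lemma lub_single: "x \<in> mcar M \<Longrightarrow> is_lub (mcar M) (mle M) {x} x"
  unfolding is_lub_def using le_refl by auto
lemma lub_pair: "a \<in> mcar M \<Longrightarrow> b \<in> mcar M \<Longrightarrow> mle M a b \<Longrightarrow> is_lub (mcar M) (mle M) {a,b} b"
  unfolding is_lub_def using le_refl by auto

lemma act_mono:
  assumes h: "q \<in> qcar Q" "a \<in> mcar M" "b \<in> mcar M" "mle M a b"
  shows "mle M (mact M q a) (mact M q b)"
proof -
  have "is_lub (mcar M) (mle M) (mact M q ` {a,b}) (mact M q b)"
    using act_lub[OF h(1) _ _ lub_pair[OF h(2,3,4)]] h by auto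
  then show ?thesis unfolding is_lub_def by auto
qed

lemma act_mono2:
  assumes h: "x \<in> mcar M" "p \<in> qcar Q" "q \<in> qcar Q" "qle Q p q"
  shows "mle M (mact M p x) (mact M q x)"
proof -
  have "is_lub (mcar M) (mle M) ((\<lambda>q. mact M q x) ` {p,q}) (mact M q x)"
    using act_lub2[OF h(1) _ _ qlub_pair[OF h(2,3,4)]] h by auto
  then show ?thesis unfolding is_lub_def by auto
qed

lemma prec1_le:
  assumes "a \<in> mcar M" "b \<in> mcar M" "mle M a b"
  shows "prec1 M F a b"
proof (rule prec1I[of a M b "{(a, qone Q)}" F a])
  show "{(a, qone Q)} \<subseteq> mcar M \<times> F" using assms one_F by auto
  show "is_lub (mcar M) (mle M) (fst ` {(a, qone Q)}) a" using lub_single assms by simp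
  show "mle M a a" using le_refl assms by simp
  show "\<And>c s. (c, s) \<in> {(a, qone Q)} \<Longrightarrow> mle M (mact M s c) b" using act_one assms by simp
qed (use assms in auto)

lemma prec1_refl: "a \<in> mcar M \<Longrightarrow> prec1 M F a a"
  using prec1_le le_refl by blast

lemma prec1_car: "prec1 M F a b \<Longrightarrow> a \<in> mcar M \<and> b \<in> mcar M"
  unfolding prec1_def by simp

lemma prec1_mono_r:
  assumes p: "prec1 M F a b" and b': "b' \<in> mcar M" "mle M b b'"
  shows "prec1 M F a b'"
proof -
  obtain P j where P: "a \<in> mcar M" "b \<in> mcar M" "P \<subseteq> mcar M \<times> F" "P \<noteq> {}" "is_lub (mcar M) (mle M) (fst ` P) j"
    "mle M a j" "\<And>c s. (c, s) \<in> P \<Longrightarrow> mle M (mact M s c) b" using prec1D[OF p] by metis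
  have "\<And>c s. (c, s) \<in> P \<Longrightarrow> mle M (mact M s c) b'"
  proof -
    fix c s assume cs: "(c, s) \<in> P"
    then have "c \<in> mcar M" "s \<in> qcar Q" using P(3) F_sub by auto
    then have "mact M s c \<in> mcar M" using act_car by blast
    then show "mle M (mact M s c) b'" using le_trans[of "mact M s c" b b'] P(7)[OF cs] P(2) b' by auto
  qed
  then show ?thesis using prec1I[OF P(1) b'(1) P(3,4,5,6)] by metis
qed

lemma prec1_act:
  assumes q: "q \<in> qcar Q" and p: "prec1 M F a b"
  shows "prec1 M F (mact M q a) (mact M q b)"
proof -
  obtain P j where P: "a \<in> mcar M" "b \<in> mcar M" "P \<subseteq> mcar M \<times> F" "P \<noteq> {}" "is_lub (mcar M) (mle M) (fst ` P) j"
    "mle M a j" "\<And>c s. (c, s) \<in> P \<Longrightarrow> mle M (mact M s c) b" using prec1D[OF p] by metis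
  define P' where "P' = (\<lambda>(c, s). (mact M q c, s)) ` P"
  have P'1: "P' \<subseteq> mcar M \<times> F" using P(3) act_car[OF q] unfolding P'_def by auto
  have P'2: "P' \<noteq> {}" using P(4) unfolding P'_def by auto
  have fP': "fst ` P' = mact M q ` fst ` P" unfolding P'_def by (simp add: image_image case_prod_beta)
  have jM: "j \<in> mcar M" using lub_car[OF P(5)] .
  have l: "is_lub (mcar M) (mle M) (fst ` P') (mact M q j)"
  proof -
    have "fst ` P \<subseteq> mcar M" using P(3) by auto
    moreover have "fst ` P \<noteq> {}" using P(4) by auto
    ultimately show ?thesis unfolding fP' using act_lub[OF q _ _ P(5)] by blast
  qed
  have le: "mle M (mact M q a) (mact M q j)" using act_mono[OF q P(1) jM P(6)] .
  have "\<And>c0 s0. (c0, s0) \<in> P' \<Longrightarrow> mle M (mact M s0 c0) (mact M q b)"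
  proof -
    fix c0 s0 assume "(c0, s0) \<in> P'"
    then obtain c s where cs: "(c, s) \<in> P" "c0 = mact M q c" "s0 = s" unfolding P'_def by auto
    then have cM: "c \<in> mcar M" and sQ: "s \<in> qcar Q" using P(3) F_sub by auto
    have e: "mact M s (mact M q c) = mact M q (mact M s c)"
      using act_assoc[OF sQ q cM] act_assoc[OF q sQ cM] qmul_comm[OF sQ q] by simp
    have "mle M (mact M q (mact M s c)) (mact M q b)"
      using act_mono[OF q act_car[OF sQ cM] P(2) P(7)[OF cs(1)]] .
    then show "mle M (mact M s0 c0) (mact M q b)" using e cs by simp
  qed
  then show ?thesis using prec1I[OF act_car[OF q P(1)] act_car[OF q P(2)] P'1 P'2 l le] by metis
qed

lemma precn_car: "precn M F n a b \<Longrightarrow> a \<in> mcar M \<and> b \<in> mcar M"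
  by (induction n arbitrary: b) (auto dest: prec1_car)

lemma precn_trans: "precn M F m b c \<Longrightarrow> precn M F n a b \<Longrightarrow> precn M F (n + m) a c"
  by (induction m arbitrary: c) auto

lemma precn_1: "precn M F (Suc 0) a b = prec1 M F a b"
  using prec1_car by auto

lemma prec_trans: "prec M F a b \<Longrightarrow> prec M F b c \<Longrightarrow> prec M F a c"
  unfolding prec_def by (metis precn_trans le_add1 order_trans)

lemma prec1_prec: "prec1 M F a b \<Longrightarrow> prec M F a b"
  unfolding prec_def using precn_1[of a b] by (intro exI[of _ "Suc 0"]) simp

lemma prec_refl: "a \<in> mcar M \<Longrightarrow> prec M F a a"
  using prec1_prec prec1_refl by blast

lemma prec_le: "a \<in> mcar M \<Longrightarrow> b \<in> mcar M \<Longrightarrow> mle M a b \<Longrightarrow> prec M F a b"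
  using prec1_prec prec1_le by blast

lemma prec_car: "prec M F a b \<Longrightarrow> a \<in> mcar M \<and> b \<in> mcar M"
  unfolding prec_def using precn_car by blast

lemma precn_act: "q \<in> qcar Q \<Longrightarrow> precn M F n a b \<Longrightarrow> precn M F n (mact M q a) (mact M q b)"
  by (induction n arbitrary: b) (auto intro: prec1_act act_car)

lemma prec_act: "q \<in> qcar Q \<Longrightarrow> prec M F a b \<Longrightarrow> prec M F (mact M q a) (mact M q b)"
  unfolding prec_def using precn_act by blast

lemma cls_self: "a \<in> mcar M \<Longrightarrow> a \<in> cls M F a"
  unfolding cls_def using prec_refl by blast

lemma cls_sub: "cls M F a \<subseteq> mcar M"
  unfolding cls_def by blast

lemma cls_eq: "a \<in> mcar M \<Longrightarrow> b \<in> mcar M \<Longrightarrow> (cls M F a = cls M F b) = (prec M F a b \<and> prec M F b a)"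
proof
  assume a: "a \<in> mcar M" "b \<in> mcar M" "cls M F a = cls M F b"
  then have "b \<in> cls M F a" using cls_self by blast
  then show "prec M F a b \<and> prec M F b a" unfolding cls_def by blast
next
  assume a: "a \<in> mcar M" "b \<in> mcar M" "prec M F a b \<and> prec M F b a"
  then show "cls M F a = cls M F b" unfolding cls_def using prec_trans by blast
qed

lemma loc_car: "mcar (loc M F) = cls M F ` mcar M" by (simp add: loc_def)

lemma loc_le: "a \<in> mcar M \<Longrightarrow> b \<in> mcar M \<Longrightarrow> mle (loc M F) (cls M F a) (cls M F b) = prec M F a b"
proof
  assume ab: "a \<in> mcar M" "b \<in> mcar M" "mle (loc M F) (cls M F a) (cls M F b)"
  then obtain a' b' where a': "a' \<in> mcar M" "b' \<in> mcar M" "cls M F a = cls M F a'" "cls M F b = cls M F b'"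
    "prec M F a' b'" by (auto simp: loc_def)
  then have "prec M F a a'" "prec M F b' b" using cls_eq ab by blast+
  then show "prec M F a b" using a' prec_trans by blast
next
  assume ab: "a \<in> mcar M" "b \<in> mcar M" "prec M F a b"
  then show "mle (loc M F) (cls M F a) (cls M F b)" by (auto simp: loc_def)
qed

lemma loc_act: "q \<in> qcar Q \<Longrightarrow> a \<in> mcar M \<Longrightarrow> mact (loc M F) q (cls M F a) = cls M F (mact M q a)"
proof -
  assume q: "q \<in> qcar Q" and a: "a \<in> mcar M"
  define a' where "a' = (SOME x. x \<in> cls M F a)"
  have "a' \<in> cls M F a" unfolding a'_def using cls_self[OF a] by (rule someI)
  then have a': "a' \<in> mcar M" "prec M F a a'" "prec M F a' a" unfolding cls_def by auto
  have "prec M F (mact M q a) (mact M q a')" "prec M F (mact M q a') (mact M q a)"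
    using prec_act q a' by blast+
  then have "cls M F (mact M q a') = cls M F (mact M q a)"
    using cls_eq act_car q a a' by blast
  then show ?thesis unfolding loc_def a'_def by simp
qed

lemma prec1_join:
  assumes A: "A \<subseteq> mcar M" "A \<noteq> {}" and j: "is_lub (mcar M) (mle M) A j" and b: "b \<in> mcar M"
    and all: "\<forall>a\<in>A. prec1 M F a b"
  shows "prec1 M F j b"
proof -
  have "\<forall>a\<in>A. \<exists>P. P \<subseteq> mcar M \<times> F \<and> P \<noteq> {} \<and> (\<exists>ja. is_lub (mcar M) (mle M) (fst ` P) ja \<and> mle M a ja)
      \<and> (\<forall>c s. (c,s)\<in>P \<longrightarrow> mle M (mact M s c) b)"
  proof
    fix a assume a: "a \<in> A"
    obtain P ja where P: "a \<in> mcar M" "b \<in> mcar M" "P \<subseteq> mcar M \<times> F" "P \<noteq> {}" "is_lub (mcar M) (mle M) (fst ` P) ja"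
      "mle M a ja" "\<And>c s. (c, s) \<in> P \<Longrightarrow> mle M (mact M s c) b" using prec1D[OF all[rule_format, OF a]] by metis
    show "\<exists>P. P \<subseteq> mcar M \<times> F \<and> P \<noteq> {} \<and> (\<exists>ja. is_lub (mcar M) (mle M) (fst ` P) ja \<and> mle M a ja)
      \<and> (\<forall>c s. (c,s)\<in>P \<longrightarrow> mle M (mact M s c) b)"
      apply (rule exI[of _ P]) using P by auto
  qed
  then obtain PP where PP: "\<forall>a\<in>A. PP a \<subseteq> mcar M \<times> F \<and> PP a \<noteq> {} \<and> (\<exists>ja. is_lub (mcar M) (mle M) (fst ` PP a) ja \<and> mle M a ja)
      \<and> (\<forall>c s. (c,s)\<in>PP a \<longrightarrow> mle M (mact M s c) b)"
    by (rule bchoice[elim_format]) blast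
  define P where "P = (\<Union>a\<in>A. PP a)"
  have Psub: "P \<subseteq> mcar M \<times> F" using PP unfolding P_def by blast
  have Pne: "P \<noteq> {}"
  proof -
    obtain a where a: "a \<in> A" using A(2) by auto
    then have "PP a \<noteq> {}" using PP by blast
    then show ?thesis using a unfolding P_def by auto
  qed
  have fPsub: "fst ` P \<subseteq> mcar M" using Psub by auto
  have "fst ` P \<noteq> {}" using Pne by auto
  then obtain k where k: "is_lub (mcar M) (mle M) (fst ` P) k" using lub_ex fPsub by blast
  have kM: "k \<in> mcar M" using lub_car[OF k] .
  have "\<forall>a\<in>A. mle M a k"
  proof
    fix a assume a: "a \<in> A"
    then obtain ja where ja: "is_lub (mcar M) (mle M) (fst ` PP a) ja" "mle M a ja" using PP by blast
    have "\<And>s. s \<in> fst ` PP a \<Longrightarrow> mle M s k"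
    proof -
      fix s assume "s \<in> fst ` PP a"
      then have "s \<in> fst ` P" using a unfolding P_def by blast
      then show "mle M s k" by (rule lub_upper[OF k])
    qed
    then have "mle M ja k" by (rule lub_least[OF ja(1) kM])
    moreover have "ja \<in> mcar M" using lub_car[OF ja(1)] .
    ultimately show "mle M a k" using le_trans[of a ja k] ja kM a A by auto
  qed
  then have jk: "mle M j k" using lub_least[OF j kM] by blast
  have jM: "j \<in> mcar M" using lub_car[OF j] .
  have "\<And>c s. (c,s)\<in>P \<Longrightarrow> mle M (mact M s c) b" using PP unfolding P_def by blast
  then show ?thesis using prec1I[OF jM b Psub Pne k jk] by metis
qed

lemma precn_mono_r: "precn M F (Suc n) a c \<Longrightarrow> k \<in> mcar M \<Longrightarrow> mle M c k \<Longrightarrow> precn M F (Suc n) a k"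
  using prec1_mono_r by auto

lemma precn_join:
  "A \<subseteq> mcar M \<Longrightarrow> A \<noteq> {} \<Longrightarrow> is_lub (mcar M) (mle M) A j \<Longrightarrow> b \<in> mcar M \<Longrightarrow>
   \<forall>a\<in>A. precn M F (Suc n) a b \<Longrightarrow> precn M F (Suc n) j b"
proof (induction n arbitrary: b)
  case 0
  then have "\<forall>a\<in>A. prec1 M F a b" using precn_1 by blast
  then have "prec1 M F j b" using prec1_join 0 by blast
  then show ?case using precn_1 by blast
next
  case (Suc n)
  have "\<forall>a\<in>A. \<exists>c. precn M F (Suc n) a c \<and> prec1 M F c b" using Suc.prems(5) by simp
  then obtain cc where cc: "\<forall>a\<in>A. precn M F (Suc n) a (cc a) \<and> prec1 M F (cc a) b"
    by (rule bchoice[elim_format]) blast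
  have CM: "cc ` A \<subseteq> mcar M" using cc prec1_car by blast
  have Cne: "cc ` A \<noteq> {}" using Suc.prems(2) by simp
  obtain k where k: "is_lub (mcar M) (mle M) (cc ` A) k" using lub_ex CM Cne by blast
  have kM: "k \<in> mcar M" using lub_car[OF k] .
  have "\<forall>a\<in>A. precn M F (Suc n) a k"
  proof
    fix a assume a: "a \<in> A"
    have "mle M (cc a) k" using lub_upper[OF k] a by blast
    then show "precn M F (Suc n) a k" using precn_mono_r cc a kM by blast
  qed
  then have "precn M F (Suc n) j k" using Suc.IH[of k] Suc.prems kM by blast
  moreover have "prec1 M F k b" using prec1_join[OF CM Cne k Suc.prems(4)] cc by auto
  ultimately show ?case by auto
qed

end

locale qml = qm +
  assumes locF: "localizable M F"
begin

lemma prec_join: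
  assumes A: "A \<subseteq> mcar M" "A \<noteq> {}" and j: "is_lub (mcar M) (mle M) A j" and b: "b \<in> mcar M"
    and all: "\<forall>a\<in>A. prec M F a b"
  shows "prec M F j b"
proof -
  have "\<forall>b\<in>mcar M. \<exists>n\<ge>1. \<forall>a\<in>mcar M. prec M F a b \<longrightarrow> precn M F n a b"
    using locF unfolding localizable_def .
  then obtain n where n: "n \<ge> 1" "\<forall>a\<in>mcar M. prec M F a b \<longrightarrow> precn M F n a b"
    using b by blast
  obtain m where m: "n = Suc m" using n(1) by (cases n) auto
  have "\<forall>a\<in>A. precn M F (Suc m) a b" using n m all A by blast
  then have h: "precn M F (Suc m) j b" by (rule precn_join[OF A(1) A(2) j b])
  show ?thesis unfolding prec_def
    apply (rule exI[of _ "Suc m"])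
    using h by (simp del: precn.simps)
qed

lemma loc_lub:
  assumes A: "A \<subseteq> mcar M" "A \<noteq> {}" and j: "is_lub (mcar M) (mle M) A j"
  shows "is_lub (mcar (loc M F)) (mle (loc M F)) (cls M F ` A) (cls M F j)"
proof -
  have jM: "j \<in> mcar M" using lub_car[OF j] .
  have 1: "cls M F j \<in> mcar (loc M F)" using jM loc_car by simp
  have 2: "\<forall>X\<in>cls M F ` A. mle (loc M F) X (cls M F j)"
  proof
    fix X assume "X \<in> cls M F ` A"
    then obtain a where a: "a \<in> A" "X = cls M F a" by blast
    have aM: "a \<in> mcar M" using a(1) A(1) by blast
    have "mle M a j" using lub_upper[OF j a(1)] .
    then have "prec M F a j" using prec_le[OF aM jM] by simp
    then show "mle (loc M F) X (cls M F j)" using loc_le[OF aM jM] a(2) by simp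
  qed
  have 3: "\<forall>Y\<in>mcar (loc M F). (\<forall>X\<in>cls M F ` A. mle (loc M F) X Y) \<longrightarrow> mle (loc M F) (cls M F j) Y"
  proof (intro ballI impI)
    fix Y assume Y: "Y \<in> mcar (loc M F)" and h: "\<forall>X\<in>cls M F ` A. mle (loc M F) X Y"
    then obtain y where y: "y \<in> mcar M" "Y = cls M F y" using loc_car by auto
    have "\<forall>a\<in>A. prec M F a y"
    proof
      fix a assume a: "a \<in> A"
      then have aM: "a \<in> mcar M" using A(1) by blast
      have "mle (loc M F) (cls M F a) Y" using h a by blast
      then show "prec M F a y" using loc_le[OF aM y(1)] y(2) by simp
    qed
    then have "prec M F j y" using prec_join[OF A(1) A(2) j y(1)] by simp
    then show "mle (loc M F) (cls M F j) Y" using loc_le[OF jM y(1)] y(2) by simp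
  qed
  show ?thesis unfolding is_lub_def by (intro conjI 1 2 3)
qed

lemma loc_poset: "poset_on (mcar (loc M F)) (mle (loc M F))"
  unfolding poset_on_def loc_car
proof (intro conjI ballI impI)
  fix X assume "X \<in> cls M F ` mcar M"
  then obtain x where x: "x \<in> mcar M" "X = cls M F x" by blast
  then show "mle (loc M F) X X" using loc_le[OF x(1) x(1)] prec_refl[OF x(1)] by simp
next
  fix X Y assume "X \<in> cls M F ` mcar M" "Y \<in> cls M F ` mcar M" and h: "mle (loc M F) X Y \<and> mle (loc M F) Y X"
  then obtain x y where x: "x \<in> mcar M" "X = cls M F x" and y: "y \<in> mcar M" "Y = cls M F y" by blast
  have "prec M F x y" "prec M F y x" using h loc_le[OF x(1) y(1)] loc_le[OF y(1) x(1)] x y by simp_all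
  then show "X = Y" using cls_eq[OF x(1) y(1)] x y by simp
next
  fix X Y Z assume "X \<in> cls M F ` mcar M" "Y \<in> cls M F ` mcar M" "Z \<in> cls M F ` mcar M"
    and h: "mle (loc M F) X Y \<and> mle (loc M F) Y Z"
  then obtain x y z where x: "x \<in> mcar M" "X = cls M F x" and y: "y \<in> mcar M" "Y = cls M F y"
    and z: "z \<in> mcar M" "Z = cls M F z" by blast
  have "prec M F x y" "prec M F y z" using h loc_le[OF x(1) y(1)] loc_le[OF y(1) z(1)] x y z by simp_all
  then have "prec M F x z" by (rule prec_trans)
  then show "mle (loc M F) X Z" using loc_le[OF x(1) z(1)] x z by simp
qed

lemma loc_reps: "S \<subseteq> mcar (loc M F) \<Longrightarrow> S = cls M F ` {x \<in> mcar M. cls M F x \<in> S}"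
  using loc_car by auto

lemma loc_module: "qmodule Q (loc M F)"
  unfolding qmodule_def
proof (intro conjI)
  show "poset_on (mcar (loc M F)) (mle (loc M F))" by (rule loc_poset)
  show "\<forall>S. S \<subseteq> mcar (loc M F) \<and> S \<noteq> {} \<longrightarrow> (\<exists>x. is_lub (mcar (loc M F)) (mle (loc M F)) S x)"
  proof (intro allI impI)
    fix S assume S: "S \<subseteq> mcar (loc M F) \<and> S \<noteq> {}"
    define A where "A = {x \<in> mcar M. cls M F x \<in> S}"
    have SA: "S = cls M F ` A" using loc_reps S unfolding A_def by blast
    have A: "A \<subseteq> mcar M" "A \<noteq> {}" using SA S unfolding A_def by auto
    obtain j where "is_lub (mcar M) (mle M) A j" using lub_ex A by blast
    then show "\<exists>x. is_lub (mcar (loc M F)) (mle (loc M F)) S x" using loc_lub A SA by blast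
  qed
  show "\<forall>q\<in>qcar Q. \<forall>x\<in>mcar (loc M F). mact (loc M F) q x \<in> mcar (loc M F)"
    using loc_act act_car loc_car by auto
  show "\<forall>p\<in>qcar Q. \<forall>q\<in>qcar Q. \<forall>x\<in>mcar (loc M F).
      mact (loc M F) (qmul Q p q) x = mact (loc M F) p (mact (loc M F) q x)"
    using loc_act act_car loc_car act_assoc qmul_car by auto
  show "\<forall>x\<in>mcar (loc M F). mact (loc M F) (qone Q) x = x"
    using loc_act loc_car act_one qone_car by auto
  show "\<forall>q\<in>qcar Q. \<forall>S x. S \<subseteq> mcar (loc M F) \<and> S \<noteq> {} \<and> is_lub (mcar (loc M F)) (mle (loc M F)) S x \<longrightarrow>
      is_lub (mcar (loc M F)) (mle (loc M F)) (mact (loc M F) q ` S) (mact (loc M F) q x)"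
  proof (intro ballI allI impI)
    fix q S X assume q: "q \<in> qcar Q" and S: "S \<subseteq> mcar (loc M F) \<and> S \<noteq> {} \<and> is_lub (mcar (loc M F)) (mle (loc M F)) S X"
    define A where "A = {x \<in> mcar M. cls M F x \<in> S}"
    have SA: "S = cls M F ` A" using loc_reps S unfolding A_def by blast
    have A: "A \<subseteq> mcar M" "A \<noteq> {}" using SA S unfolding A_def by auto
    obtain j where j: "is_lub (mcar M) (mle M) A j" using lub_ex A by blast
    have jM: "j \<in> mcar M" using lub_car[OF j] .
    have "is_lub (mcar (loc M F)) (mle (loc M F)) S (cls M F j)" using loc_lub A j SA by blast
    then have X: "X = cls M F j" using lub_unique[OF loc_poset] S by blast
    have img: "mact (loc M F) q ` S = cls M F ` (mact M q ` A)"
      unfolding SA image_image using loc_act q A by auto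
    have qA: "mact M q ` A \<subseteq> mcar M" "mact M q ` A \<noteq> {}" using A act_car q by auto
    have "is_lub (mcar M) (mle M) (mact M q ` A) (mact M q j)" using act_lub q A j by blast
    then have "is_lub (mcar (loc M F)) (mle (loc M F)) (cls M F ` (mact M q ` A)) (cls M F (mact M q j))"
      using loc_lub qA by blast
    then show "is_lub (mcar (loc M F)) (mle (loc M F)) (mact (loc M F) q ` S) (mact (loc M F) q X)"
      unfolding img X using loc_act q jM by simp
  qed
  show "\<forall>x\<in>mcar (loc M F). \<forall>S p. S \<subseteq> qcar Q \<and> S \<noteq> {} \<and> is_lub (qcar Q) (qle Q) S p \<longrightarrow>
      is_lub (mcar (loc M F)) (mle (loc M F)) ((\<lambda>q. mact (loc M F) q x) ` S) (mact (loc M F) p x)"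
  proof (intro ballI allI impI)
    fix X S p assume X: "X \<in> mcar (loc M F)" and S: "S \<subseteq> qcar Q \<and> S \<noteq> {} \<and> is_lub (qcar Q) (qle Q) S p"
    obtain x where x: "x \<in> mcar M" "X = cls M F x" using X loc_car by auto
    have pQ: "p \<in> qcar Q" using S lub_car[of "qcar Q" "qle Q" S p] by blast
    have img: "(\<lambda>q. mact (loc M F) q X) ` S = cls M F ` ((\<lambda>q. mact M q x) ` S)"
      unfolding image_image using loc_act x S by auto
    have sA: "(\<lambda>q. mact M q x) ` S \<subseteq> mcar M" "(\<lambda>q. mact M q x) ` S \<noteq> {}" using S act_car x by auto
    have "is_lub (mcar M) (mle M) ((\<lambda>q. mact M q x) ` S) (mact M p x)" using act_lub2 x S by blast
    then have "is_lub (mcar (loc M F)) (mle (loc M F)) (cls M F ` ((\<lambda>q. mact M q x) ` S)) (cls M F (mact M p x))"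
      using loc_lub sA by blast
    then show "is_lub (mcar (loc M F)) (mle (loc M F)) ((\<lambda>q. mact (loc M F) q X) ` S) (mact (loc M F) p X)"
      unfolding img using loc_act pQ x by simp
  qed
qed

end



lemma order_iso_lub:
  assumes bij: "bij_betw f A B" and ord: "\<And>x y. x \<in> A \<Longrightarrow> y \<in> A \<Longrightarrow> leB (f x) (f y) = leA x y"
    and S: "S \<subseteq> A" and l: "is_lub A leA S x"
  shows "is_lub B leB (f ` S) (f x)"
proof -
  have xA: "x \<in> A" using l unfolding is_lub_def by simp
  have 1: "f x \<in> B" using bij xA unfolding bij_betw_def by auto
  have 2: "\<forall>t\<in>f ` S. leB t (f x)"
  proof
    fix t assume "t \<in> f ` S"
    then obtain s where s: "s \<in> S" "t = f s" by blast
    have "leA s x" using l s(1) unfolding is_lub_def by simp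
    then show "leB t (f x)" using ord[of s x] s S xA by auto
  qed
  have 3: "\<forall>y\<in>B. (\<forall>t\<in>f ` S. leB t y) \<longrightarrow> leB (f x) y"
  proof (intro ballI impI)
    fix y assume y: "y \<in> B" and h: "\<forall>t\<in>f ` S. leB t y"
    obtain y' where y': "y' \<in> A" "y = f y'" using y bij unfolding bij_betw_def by blast
    have "\<forall>s\<in>S. leA s y'"
    proof
      fix s assume s: "s \<in> S"
      then have "leB (f s) (f y')" using h y' by auto
      then show "leA s y'" using ord[of s y'] s S y' by auto
    qed
    then have "leA x y'" using l y'(1) unfolding is_lub_def by simp
    then show "leB (f x) y" using ord[of x y'] xA y' by auto
  qed
  show ?thesis unfolding is_lub_def using 1 2 3 by simp
qed

lemma inv_ord:
  assumes bij: "bij_betw f A B" and ord: "\<And>x y. x \<in> A \<Longrightarrow> y \<in> A \<Longrightarrow> leB (f x) (f y) = leA x y"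
    and u: "u \<in> B" and v: "v \<in> B"
  shows "leA (inv_into A f u) (inv_into A f v) = leB u v"
proof -
  have su: "u \<in> f ` A" "v \<in> f ` A" using bij u v unfolding bij_betw_def by auto
  have "inv_into A f u \<in> A" "inv_into A f v \<in> A" using su by (auto intro: inv_into_into)
  then have "leB (f (inv_into A f u)) (f (inv_into A f v)) = leA (inv_into A f u) (inv_into A f v)"
    using ord by blast
  then show ?thesis using f_inv_into_f[OF su(1)] f_inv_into_f[OF su(2)] by simp
qed

lemma inv_act:
  assumes bij: "bij_betw f A B" and hA: "\<And>x. x \<in> A \<Longrightarrow> h x \<in> A"
    and comm: "\<And>x. x \<in> A \<Longrightarrow> f (h x) = k (f x)" and y: "y \<in> B"
  shows "inv_into A f (k y) = h (inv_into A f y)"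
proof -
  have sy: "y \<in> f ` A" using bij y unfolding bij_betw_def by auto
  define x where "x = inv_into A f y"
  have xA: "x \<in> A" unfolding x_def using sy by (rule inv_into_into)
  have fx: "f x = y" unfolding x_def using sy by (rule f_inv_into_f)
  have "k y = f (h x)" using comm[OF xA] fx by simp
  moreover have "inj_on f A" using bij unfolding bij_betw_def by simp
  ultimately have "inv_into A f (k y) = h x" using inv_into_f_f hA[OF xA] by simp
  then show ?thesis unfolding x_def .
qed

context qm
begin

lemma prec1_split:
  assumes f: "f \<in> F" and g: "g \<in> qcar Q" and s: "s \<in> qcar Q" and fgs: "qle Q (qmul Q f g) s"
    and c: "c \<in> mcar M" and y: "y \<in> mcar M" and sc: "mle M (mact M s c) y"
  shows "prec1 M F (mact M g c) y"
proof -
  have fQ: "f \<in> qcar Q" using f F_sub by blast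
  have gc: "mact M g c \<in> mcar M" using act_car[OF g c] .
  have e: "mact M f (mact M g c) = mact M (qmul Q f g) c" using act_assoc[OF fQ g c] by simp
  have fgQ: "qmul Q f g \<in> qcar Q" using qmul_car[OF fQ g] .
  have "mle M (mact M (qmul Q f g) c) (mact M s c)" using act_mono2[OF c fgQ s fgs] .
  then have le: "mle M (mact M f (mact M g c)) y"
    using le_trans[OF act_car[OF fgQ c] act_car[OF s c] y _ sc] e by simp
  show ?thesis
  proof (rule prec1I[of _ M _ "{(mact M g c, f)}" F "mact M g c"])
    show "{(mact M g c, f)} \<subseteq> mcar M \<times> F" using gc f by simp
    show "is_lub (mcar M) (mle M) (fst ` {(mact M g c, f)}) (mact M g c)" using lub_single[OF gc] by simp
    show "mle M (mact M g c) (mact M g c)" using le_refl[OF gc] .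
    show "\<And>c' s'. (c', s') \<in> {(mact M g c, f)} \<Longrightarrow> mle M (mact M s' c') y" using le by simp
  qed (use gc y in auto)
qed

end

theorem mainTheorem2:
  fixes Q :: "'q quantale_str" and M :: "('q, 'm) qmod" and F G :: "'q set"
  assumes "quantale Q"
    and "qmodule Q M"
    and "F \<in> mF Q" and "G \<in> mF Q"
    and "localizable M F"
    and "localizable M (mfilter_sum Q F G)"
  shows "qmodule Q (loc M F) \<and> localizable (loc M F) G \<and>
    (\<exists>\<phi>. (\<forall>x\<in>mcar M. \<phi> (cls M (mfilter_sum Q F G) x) = cls (loc M F) G (cls M F x)) \<and>
         module_iso Q (loc M (mfilter_sum Q F G)) (loc (loc M F) G) \<phi>)"
proof -
  have FF: "mfilter Q F" using assms(3) by (simp add: mF_def)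
  have GG: "mfilter Q G" using assms(4) by (simp add: mF_def)
  interpret Fm: qml Q M F
    by (simp add: qml_def qml_axioms_def qm_def qm_axioms_def quant_def assms(1,2,5) FF)
  obtain H where H: "H = mfilter_sum Q F G" by simp
  have HH: "mfilter Q H" using Fm.sum_filter[OF FF GG] H by simp
  have locH: "localizable M H" using assms(6) H by simp
  interpret Hm: qml Q M H
    by (simp add: qml_def qml_axioms_def qm_def qm_axioms_def quant_def assms(1,2) HH locH)
  have FH: "F \<subseteq> H" using Fm.sum_sup(1) H by simp
  have GH: "G \<subseteq> H" using Fm.sum_sup(2) H by simp
  have HK: "H \<subseteq> {t \<in> qcar Q. \<exists>f\<in>F. \<exists>g\<in>G. qle Q (qmul Q f g) t}" using Fm.sum_sub_K[OF FF GG] H by simp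
  have Lmod: "qmodule Q (loc M F)" by (rule Fm.loc_module)
  interpret Lm: qm Q "loc M F" G
    by (simp add: qm_def qm_axioms_def quant_def assms(1) Lmod GG)
  have GQ: "G \<subseteq> qcar Q" by (rule Lm.F_sub)
  have HQ: "H \<subseteq> qcar Q" by (rule Hm.F_sub)

  have S1: "prec1 (loc M F) G (cls M F x) (cls M F y)" if p: "prec1 M H x y" for x y
  proof -
    obtain P j where P: "x \<in> mcar M" "y \<in> mcar M" "P \<subseteq> mcar M \<times> H" "P \<noteq> {}" "is_lub (mcar M) (mle M) (fst ` P) j"
      "mle M x j" "\<And>c s. (c, s) \<in> P \<Longrightarrow> mle M (mact M s c) y" using prec1D[OF p] by metis
    have "\<forall>s\<in>H. \<exists>f g. f \<in> F \<and> g \<in> G \<and> qle Q (qmul Q f g) s" using HK by blast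
    then obtain ff gg where fg: "\<And>s. s \<in> H \<Longrightarrow> ff s \<in> F \<and> gg s \<in> G \<and> qle Q (qmul Q (ff s) (gg s)) s" by metis
    define P' where "P' = (\<lambda>(c, s). (cls M F c, gg s)) ` P"
    have P'1: "P' \<subseteq> mcar (loc M F) \<times> G" using P(3) fg Fm.loc_car unfolding P'_def by auto
    have P'2: "P' \<noteq> {}" using P(4) unfolding P'_def by auto
    have fP': "fst ` P' = cls M F ` fst ` P" unfolding P'_def by (simp add: image_image case_prod_beta)
    have fPM: "fst ` P \<subseteq> mcar M" using P(3) by auto
    have fPne: "fst ` P \<noteq> {}" using P(4) by auto
    have jM: "j \<in> mcar M" using Fm.lub_car[OF P(5)] .
    have l: "is_lub (mcar (loc M F)) (mle (loc M F)) (fst ` P') (cls M F j)"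
      unfolding fP' using Fm.loc_lub[OF fPM fPne P(5)] .
    have le: "mle (loc M F) (cls M F x) (cls M F j)"
      using Fm.loc_le[OF P(1) jM] Fm.prec_le[OF P(1) jM P(6)] by simp
    have each: "\<And>C t. (C, t) \<in> P' \<Longrightarrow> mle (loc M F) (mact (loc M F) t C) (cls M F y)"
    proof -
      fix C t assume "(C, t) \<in> P'"
      then obtain c s where cs: "(c, s) \<in> P" "C = cls M F c" "t = gg s" unfolding P'_def by auto
      have cM: "c \<in> mcar M" and sH: "s \<in> H" using cs(1) P(3) by auto
      have sQ: "s \<in> qcar Q" using sH HQ by auto
      have fgs: "ff s \<in> F" "gg s \<in> G" "qle Q (qmul Q (ff s) (gg s)) s" using fg[OF sH] by auto
      have gQ: "gg s \<in> qcar Q" using fgs(2) GQ by auto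
      have "prec1 M F (mact M (gg s) c) y"
        using Fm.prec1_split[OF fgs(1) gQ sQ fgs(3) cM P(2) P(7)[OF cs(1)]] .
      then have "prec M F (mact M (gg s) c) y" by (rule Fm.prec1_prec)
      then have "mle (loc M F) (cls M F (mact M (gg s) c)) (cls M F y)"
        using Fm.loc_le[OF Fm.act_car[OF gQ cM] P(2)] by simp
      then show "mle (loc M F) (mact (loc M F) t C) (cls M F y)"
        using Fm.loc_act[OF gQ cM] cs by simp
    qed
    have cx: "cls M F x \<in> mcar (loc M F)" "cls M F y \<in> mcar (loc M F)" using P(1,2) Fm.loc_car by auto
    show ?thesis using prec1I[OF cx P'1 P'2 l le each] by metis
  qed

  have S2: "prec M H c y" if c: "c \<in> mcar M" and y: "y \<in> mcar M"
    and p: "prec1 (loc M F) G (cls M F c) (cls M F y)" for c y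
  proof -
    obtain P J where P: "cls M F c \<in> mcar (loc M F)" "cls M F y \<in> mcar (loc M F)"
      "P \<subseteq> mcar (loc M F) \<times> G" "P \<noteq> {}" "is_lub (mcar (loc M F)) (mle (loc M F)) (fst ` P) J"
      "mle (loc M F) (cls M F c) J" "\<And>C s. (C, s) \<in> P \<Longrightarrow> mle (loc M F) (mact (loc M F) s C) (cls M F y)"
      using prec1D[OF p] by metis
    define P2 where "P2 = {(a, s). a \<in> mcar M \<and> (cls M F a, s) \<in> P}"
    define A where "A = fst ` P2"
    have clsA: "cls M F ` A = fst ` P"
    proof
      show "cls M F ` A \<subseteq> fst ` P" unfolding A_def P2_def by force
      show "fst ` P \<subseteq> cls M F ` A"
      proof
        fix C assume "C \<in> fst ` P"
        then obtain s where Cs: "(C, s) \<in> P" by force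
        then have "C \<in> mcar (loc M F)" using P(3) by auto
        then obtain a where a: "a \<in> mcar M" "C = cls M F a" using Fm.loc_car by auto
        then have "(a, s) \<in> P2" using Cs unfolding P2_def by simp
        then show "C \<in> cls M F ` A" unfolding A_def using a by force
      qed
    qed
    have P2sub: "P2 \<subseteq> mcar M \<times> H" using P(3) GH unfolding P2_def by auto
    have P2ne: "P2 \<noteq> {}"
    proof -
      obtain C s where Cs: "(C, s) \<in> P" using P(4) by auto
      then have "C \<in> mcar (loc M F)" using P(3) by auto
      then obtain a where a: "a \<in> mcar M" "C = cls M F a" using Fm.loc_car by auto
      then have "(a, s) \<in> P2" using Cs unfolding P2_def by simp
      then show ?thesis by auto
    qed
    have AM: "A \<subseteq> mcar M" unfolding A_def using P2sub by auto
    have Ane: "A \<noteq> {}" unfolding A_def using P2ne by auto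
    obtain j where j: "is_lub (mcar M) (mle M) A j" using Fm.lub_ex[OF AM Ane] by blast
    have jM: "j \<in> mcar M" using Fm.lub_car[OF j] .
    have "is_lub (mcar (loc M F)) (mle (loc M F)) (fst ` P) (cls M F j)"
      using Fm.loc_lub[OF AM Ane j] clsA by simp
    then have JJ: "J = cls M F j" using lub_unique[OF Fm.loc_poset P(5)] by simp
    have cj: "prec M F c j" using P(6) JJ Fm.loc_le[OF c jM] by simp
    define B where "B = (\<lambda>(a, s). mact M s a) ` P2"
    have BM: "B \<subseteq> mcar M" unfolding B_def using P2sub HQ Fm.act_car by auto
    have Bne: "B \<noteq> {}" unfolding B_def using P2ne by auto
    obtain k where k: "is_lub (mcar M) (mle M) B k" using Fm.lub_ex[OF BM Bne] by blast
    have kM: "k \<in> mcar M" using Fm.lub_car[OF k] .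
    have jk: "prec1 M H j k"
    proof (rule prec1I[of j M k P2 H j])
      show "j \<in> mcar M" by (rule jM)
      show "k \<in> mcar M" by (rule kM)
      show "P2 \<subseteq> mcar M \<times> H" by (rule P2sub)
      show "P2 \<noteq> {}" by (rule P2ne)
      show "is_lub (mcar M) (mle M) (fst ` P2) j" using j unfolding A_def .
      show "mle M j j" using Fm.le_refl[OF jM] .
      show "\<And>a s. (a, s) \<in> P2 \<Longrightarrow> mle M (mact M s a) k"
      proof -
        fix a s assume "(a, s) \<in> P2"
        then have "mact M s a \<in> B" unfolding B_def by force
        then show "mle M (mact M s a) k" by (rule Fm.lub_upper[OF k])
      qed
    qed
    have By: "\<forall>b\<in>B. prec M F b y"
    proof
      fix b assume "b \<in> B"
      then obtain a s where as: "(a, s) \<in> P2" "b = mact M s a" unfolding B_def by auto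
      have aM: "a \<in> mcar M" and aP: "(cls M F a, s) \<in> P" using as(1) unfolding P2_def by auto
      have sQ: "s \<in> qcar Q" using aP P(3) GQ by auto
      have "mle (loc M F) (mact (loc M F) s (cls M F a)) (cls M F y)" using P(7)[OF aP] .
      then have "mle (loc M F) (cls M F (mact M s a)) (cls M F y)" using Fm.loc_act[OF sQ aM] by simp
      then show "prec M F b y" using Fm.loc_le[OF Fm.act_car[OF sQ aM] y] as(2) by simp
    qed
    have ky: "prec M F k y" using Fm.prec_join[OF BM Bne k y By] .
    have "prec M H c j" using prec_filter_mono[OF FH cj] .
    moreover have "prec M H j k" using Hm.prec1_prec[OF jk] .
    moreover have "prec M H k y" using prec_filter_mono[OF FH ky] .
    ultimately show ?thesis using Hm.prec_trans by blast
  qed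

  have K1a: "precn (loc M F) G n (cls M F x) (cls M F y)" if "precn M H n x y" for n x y
    using that
  proof (induction n arbitrary: y)
    case 0
    then have "x = y" "x \<in> mcar M" by auto
    then show ?case using Fm.loc_car by auto
  next
    case (Suc n)
    from Suc.prems obtain c where c: "precn M H n x c" "prec1 M H c y" by auto
    have 1: "precn (loc M F) G n (cls M F x) (cls M F c)" using Suc.IH[OF c(1)] .
    have 2: "prec1 (loc M F) G (cls M F c) (cls M F y)" using S1[OF c(2)] .
    show ?case using 1 2 by (simp only: precn.simps) blast
  qed

  have K1b: "prec M H x y" if "precn (loc M F) G n X Y" "x \<in> mcar M" "y \<in> mcar M"
    "X = cls M F x" "Y = cls M F y" for n X Y x y
    using that
  proof (induction n arbitrary: Y y)
    case 0
    then have "cls M F x = cls M F y" by auto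
    then have "prec M F x y" using Fm.cls_eq[OF 0(2) 0(3)] by simp
    then show ?case by (rule prec_filter_mono[OF FH])
  next
    case (Suc n)
    from Suc.prems(1) obtain C where C: "precn (loc M F) G n X C" "prec1 (loc M F) G C Y" by auto
    have "C \<in> mcar (loc M F)" using Lm.prec1_car[OF C(2)] by simp
    then obtain c where c: "c \<in> mcar M" "C = cls M F c" using Fm.loc_car by auto
    have 1: "prec M H x c" using Suc.IH[OF C(1) Suc.prems(2) c(1) Suc.prems(4) c(2)] .
    have 2: "prec M H c y" using S2[OF c(1) Suc.prems(3)] C(2) c(2) Suc.prems(5) by simp
    show ?case using Hm.prec_trans[OF 1 2] .
  qed

  have K1: "prec M H x y = prec (loc M F) G (cls M F x) (cls M F y)" if "x \<in> mcar M" "y \<in> mcar M" for x y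
  proof
    assume "prec M H x y"
    then obtain n where n: "n \<ge> 1" "precn M H n x y" unfolding prec_def by blast
    show "prec (loc M F) G (cls M F x) (cls M F y)" unfolding prec_def using K1a[OF n(2)] n(1) by blast
  next
    assume "prec (loc M F) G (cls M F x) (cls M F y)"
    then obtain n where n: "n \<ge> 1" "precn (loc M F) G n (cls M F x) (cls M F y)" unfolding prec_def by blast
    show "prec M H x y" using K1b[OF n(2) that refl refl] .
  qed

  have locG: "localizable (loc M F) G"
    unfolding localizable_def
  proof
    fix Y assume "Y \<in> mcar (loc M F)"
    then obtain y where y: "y \<in> mcar M" "Y = cls M F y" using Fm.loc_car by auto
    obtain n where n: "n \<ge> 1" "\<forall>a\<in>mcar M. prec M H a y \<longrightarrow> precn M H n a y"
      using Hm.locF y(1) unfolding localizable_def by blast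
    have "\<forall>X\<in>mcar (loc M F). prec (loc M F) G X Y \<longrightarrow> precn (loc M F) G n X Y"
    proof (intro ballI impI)
      fix X assume X: "X \<in> mcar (loc M F)" and p: "prec (loc M F) G X Y"
      then obtain x where x: "x \<in> mcar M" "X = cls M F x" using Fm.loc_car by auto
      have "prec M H x y" using K1[OF x(1) y(1)] p x y by simp
      then have "precn M H n x y" using n x by blast
      then show "precn (loc M F) G n X Y" using K1a x y by blast
    qed
    then show "\<exists>n\<ge>1. \<forall>X\<in>mcar (loc M F). prec (loc M F) G X Y \<longrightarrow> precn (loc M F) G n X Y"
      using n(1) by blast
  qed

  define phi where "phi Z = cls (loc M F) G (cls M F (SOME z. z \<in> Z))" for Z
  have clsF: "cls M F x \<in> mcar (loc M F)" if "x \<in> mcar M" for x using that Fm.loc_car by auto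
  have phi_cls: "phi (cls M H x) = cls (loc M F) G (cls M F x)" if x: "x \<in> mcar M" for x
  proof -
    define z where "z = (SOME z. z \<in> cls M H x)"
    have "z \<in> cls M H x" unfolding z_def using Hm.cls_self[OF x] by (rule someI)
    then have z: "z \<in> mcar M" "prec M H x z" "prec M H z x" unfolding cls_def by auto
    have "prec (loc M F) G (cls M F x) (cls M F z)" "prec (loc M F) G (cls M F z) (cls M F x)"
      using K1 z x by blast+
    then have "cls (loc M F) G (cls M F z) = cls (loc M F) G (cls M F x)"
      using Lm.cls_eq[OF clsF[OF z(1)] clsF[OF x]] by simp
    then show ?thesis unfolding phi_def z_def by simp
  qed
  have carH: "mcar (loc M H) = cls M H ` mcar M" by (rule Hm.loc_car)
  have carLG: "mcar (loc (loc M F) G) = (\<lambda>x. cls (loc M F) G (cls M F x)) ` mcar M"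
    using Lm.loc_car Fm.loc_car by (simp add: image_image)
  have inj: "inj_on phi (mcar (loc M H))"
  proof (rule inj_onI)
    fix X Y assume X: "X \<in> mcar (loc M H)" and Y: "Y \<in> mcar (loc M H)" and e: "phi X = phi Y"
    obtain x where x: "x \<in> mcar M" "X = cls M H x" using X carH by auto
    obtain y where y: "y \<in> mcar M" "Y = cls M H y" using Y carH by auto
    have "cls (loc M F) G (cls M F x) = cls (loc M F) G (cls M F y)" using e x y phi_cls by simp
    then have "prec (loc M F) G (cls M F x) (cls M F y)" "prec (loc M F) G (cls M F y) (cls M F x)"
      using Lm.cls_eq[OF clsF[OF x(1)] clsF[OF y(1)]] by simp_all
    then have "prec M H x y" "prec M H y x" using K1 x y by blast+
    then show "X = Y" using Hm.cls_eq[OF x(1) y(1)] x y by simp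
  qed
  have img: "phi ` mcar (loc M H) = mcar (loc (loc M F) G)"
    unfolding carH carLG image_image using phi_cls by simp
  have bij: "bij_betw phi (mcar (loc M H)) (mcar (loc (loc M F) G))"
    unfolding bij_betw_def using inj img by simp
  have ord: "mle (loc (loc M F) G) (phi X) (phi Y) = mle (loc M H) X Y"
    if X: "X \<in> mcar (loc M H)" and Y: "Y \<in> mcar (loc M H)" for X Y
  proof -
    obtain x where x: "x \<in> mcar M" "X = cls M H x" using X carH by auto
    obtain y where y: "y \<in> mcar M" "Y = cls M H y" using Y carH by auto
    have "mle (loc (loc M F) G) (phi X) (phi Y) = prec (loc M F) G (cls M F x) (cls M F y)"
      using phi_cls x y Lm.loc_le[OF clsF[OF x(1)] clsF[OF y(1)]] by simp
    also have "\<dots> = prec M H x y" using K1[OF x(1) y(1)] by simp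
    also have "\<dots> = mle (loc M H) X Y" using Hm.loc_le[OF x(1) y(1)] x y by simp
    finally show ?thesis .
  qed
  have actc: "phi (mact (loc M H) q X) = mact (loc (loc M F) G) q (phi X)"
    if q: "q \<in> qcar Q" and X: "X \<in> mcar (loc M H)" for q X
  proof -
    obtain x where x: "x \<in> mcar M" "X = cls M H x" using X carH by auto
    have qx: "mact M q x \<in> mcar M" using Fm.act_car[OF q x(1)] .
    have "phi (mact (loc M H) q X) = cls (loc M F) G (cls M F (mact M q x))"
      using Hm.loc_act[OF q x(1)] phi_cls[OF qx] x by simp
    also have "\<dots> = cls (loc M F) G (mact (loc M F) q (cls M F x))" using Fm.loc_act[OF q x(1)] by simp
    also have "\<dots> = mact (loc (loc M F) G) q (cls (loc M F) G (cls M F x))"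
      using Lm.loc_act[OF q clsF[OF x(1)]] by simp
    also have "\<dots> = mact (loc (loc M F) G) q (phi X)" using phi_cls[OF x(1)] x by simp
    finally show ?thesis .
  qed
  have actH: "mact (loc M H) q X \<in> mcar (loc M H)" if q: "q \<in> qcar Q" and X: "X \<in> mcar (loc M H)" for q X
  proof -
    obtain x where x: "x \<in> mcar M" "X = cls M H x" using X carH by auto
    show ?thesis using Hm.loc_act[OF q x(1)] Fm.act_car[OF q x(1)] carH x by simp
  qed
  have hom1: "module_hom Q (loc M H) (loc (loc M F) G) phi"
    unfolding module_hom_def
  proof (intro conjI allI impI ballI)
    show "phi ` mcar (loc M H) \<subseteq> mcar (loc (loc M F) G)" using img by simp
    fix S x assume "S \<subseteq> mcar (loc M H) \<and> S \<noteq> {} \<and> is_lub (mcar (loc M H)) (mle (loc M H)) S x"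
    then show "is_lub (mcar (loc (loc M F) G)) (mle (loc (loc M F) G)) (phi ` S) (phi x)"
      using order_iso_lub[where leB="mle (loc (loc M F) G)" and leA="mle (loc M H)", OF bij ord] by blast
  next
    fix q X assume "q \<in> qcar Q" "X \<in> mcar (loc M H)"
    then show "phi (mact (loc M H) q X) = mact (loc (loc M F) G) q (phi X)" by (rule actc)
  qed
  have bij2: "bij_betw (inv_into (mcar (loc M H)) phi) (mcar (loc (loc M F) G)) (mcar (loc M H))"
    using bij by (rule bij_betw_inv_into)
  have ord2: "mle (loc M H) (inv_into (mcar (loc M H)) phi u) (inv_into (mcar (loc M H)) phi v)
      = mle (loc (loc M F) G) u v"
    if "u \<in> mcar (loc (loc M F) G)" "v \<in> mcar (loc (loc M F) G)" for u v
    using inv_ord[where leB="mle (loc (loc M F) G)" and leA="mle (loc M H)", OF bij ord that] .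
  have hom2: "module_hom Q (loc (loc M F) G) (loc M H) (inv_into (mcar (loc M H)) phi)"
    unfolding module_hom_def
  proof (intro conjI allI impI ballI)
    show "inv_into (mcar (loc M H)) phi ` mcar (loc (loc M F) G) \<subseteq> mcar (loc M H)"
      using bij2 unfolding bij_betw_def by simp
    fix S x assume "S \<subseteq> mcar (loc (loc M F) G) \<and> S \<noteq> {} \<and> is_lub (mcar (loc (loc M F) G)) (mle (loc (loc M F) G)) S x"
    then show "is_lub (mcar (loc M H)) (mle (loc M H)) (inv_into (mcar (loc M H)) phi ` S) (inv_into (mcar (loc M H)) phi x)"
      using order_iso_lub[where leB="mle (loc M H)" and leA="mle (loc (loc M F) G)", OF bij2 ord2] by blast
  next
    fix q Y assume q: "q \<in> qcar Q" and Y: "Y \<in> mcar (loc (loc M F) G)"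
    show "inv_into (mcar (loc M H)) phi (mact (loc (loc M F) G) q Y) = mact (loc M H) q (inv_into (mcar (loc M H)) phi Y)"
      using inv_act[OF bij, of "mact (loc M H) q" "mact (loc (loc M F) G) q", OF actH[OF q] actc[OF q] Y] .
  qed
  have iso: "module_iso Q (loc M H) (loc (loc M F) G) phi"
    unfolding module_iso_def using bij hom1 hom2 by simp
  show ?thesis unfolding H[symmetric] using Lmod locG iso phi_cls by blast
qed

end
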